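(* Let $\alpha \in \mathbb{R}_{>0}$ and $M_\alpha = \{f(\alpha) \mid f(x) \in \mathbb{N}_0[x,x^{-1}]\}$ as an additive monoid. The following are equivalent: (a) $M_\alpha$ is an FFM; (b) $M_\alpha$ is a BFM; (c) $M_\alpha$ satisfies the ACCP.
   Context: $\mathbb{N}_0[x,x^{-1}]$ denotes the semiring of Laurent polynomials with coefficients in $\mathbb{N}_0$. For an atomic reduced additive monoid $M$ and nonzero $x \in M$, $\mathsf{Z}(x)$ is the set of factorizations of $x$ (formal sums of atoms, up to order, adding to $x$) and $\mathsf{L}(x)$ the set of their lengths (number of atoms counted with repetition). $M$ is an FFM (finite factorization monoid) if it is atomic and $\mathsf{Z}(x)$ is finite for all nonzero $x$, and a BFM (bounded factorization monoid) if it is atomic and $\mathsf{L}(x)$ is finite for all nonzero $x$. $M$ satisfies the ACCP if every ascending chain of principal ideals $x_1 + M \subseteq x_2 + M \subseteq \cdots$ eventually stabilizes. *)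

theory Defs
  imports Complex_Main "HOL-Library.Multiset"
begin

definition laurent_monoid :: "real \<Rightarrow> real set" where
  "laurent_monoid \<alpha> = {(\<Sum>k\<in>S. of_nat (c k) * \<alpha> powi k) | S c. finite (S :: int set)}"

definition mon_unit :: "'a::comm_monoid_add set \<Rightarrow> 'a \<Rightarrow> bool" where
  "mon_unit M u \<longleftrightarrow> u \<in> M \<and> (\<exists>v\<in>M. u + v = 0)"

definition mon_atom :: "'a::comm_monoid_add set \<Rightarrow> 'a \<Rightarrow> bool" where
  "mon_atom M a \<longleftrightarrow> a \<in> M \<and> \<not> mon_unit M a \<and>
     (\<forall>x\<in>M. \<forall>y\<in>M. a = x + y \<longrightarrow> mon_unit M x \<or> mon_unit M y)"

definition mon_atomic :: "'a::comm_monoid_add set \<Rightarrow> bool" where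
  "mon_atomic M \<longleftrightarrow> (\<forall>x\<in>M. \<not> mon_unit M x \<longrightarrow>
     (\<exists>A. (\<forall>a\<in>set_mset A. mon_atom M a) \<and> sum_mset A = x))"

text \<open>Factorizations (for reduced monoids): multisets of atoms summing to x.\<close>
definition factorizations :: "'a::comm_monoid_add set \<Rightarrow> 'a \<Rightarrow> 'a multiset set" where
  "factorizations M x = {A. (\<forall>a\<in>set_mset A. mon_atom M a) \<and> sum_mset A = x}"

definition lengths :: "'a::comm_monoid_add set \<Rightarrow> 'a \<Rightarrow> nat set" where
  "lengths M x = size ` factorizations M x"

definition is_FFM :: "'a::comm_monoid_add set \<Rightarrow> bool" where
  "is_FFM M \<longleftrightarrow> mon_atomic M \<and> (\<forall>x\<in>M. x \<noteq> 0 \<longrightarrow> finite (factorizations M x))"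

definition is_BFM :: "'a::comm_monoid_add set \<Rightarrow> bool" where
  "is_BFM M \<longleftrightarrow> mon_atomic M \<and> (\<forall>x\<in>M. x \<noteq> 0 \<longrightarrow> finite (lengths M x))"

definition principal_ideal :: "'a::comm_monoid_add set \<Rightarrow> 'a \<Rightarrow> 'a set" where
  "principal_ideal M x = (\<lambda>m. x + m) ` M"

definition satisfies_ACCP :: "'a::comm_monoid_add set \<Rightarrow> bool" where
  "satisfies_ACCP M \<longleftrightarrow> (\<forall>s :: nat \<Rightarrow> 'a. (\<forall>n. s n \<in> M) \<longrightarrow>
     (\<forall>n. principal_ideal M (s n) \<subseteq> principal_ideal M (s (Suc n))) \<longrightarrow>
     (\<exists>N. \<forall>n\<ge>N. principal_ideal M (s n) = principal_ideal M (s N)))"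

end

theory Submission
  imports Defs "HOL-Computational_Algebra.Polynomial"
begin

definition nice :: "real set \<Rightarrow> bool" where
  "nice M \<longleftrightarrow> 0 \<in> M \<and> (\<forall>x\<in>M. x \<ge> 0) \<and> (\<forall>x\<in>M. \<forall>y\<in>M. x + y \<in> M)"

lemma nice_unit: "nice M \<Longrightarrow> mon_unit M u \<longleftrightarrow> u = 0"
  unfolding nice_def mon_unit_def by (metis add.right_neutral add_nonneg_eq_0_iff)

lemma nice_atom: "nice M \<Longrightarrow> mon_atom M a \<longleftrightarrow> a \<in> M \<and> a \<noteq> 0 \<and> (\<forall>x\<in>M. \<forall>y\<in>M. a = x + y \<longrightarrow> x = 0 \<or> y = 0)"
  by (simp add: mon_atom_def nice_unit)

lemma nice_sum_mset: "nice M \<Longrightarrow> (\<forall>a\<in>#A. a \<in> M) \<Longrightarrow> sum_mset A \<in> M"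
  by (induction A) (auto simp: nice_def)

lemma FFM_BFM: "is_FFM M \<Longrightarrow> is_BFM M"
  unfolding is_FFM_def is_BFM_def lengths_def by auto

lemma nice_fact:
  assumes "nice M" "mon_atomic M" "x \<in> M"
  shows "\<exists>A. (\<forall>a\<in>#A. mon_atom M a) \<and> sum_mset A = x"
proof (cases "x = 0")
  case True then show ?thesis by (intro exI[of _ "{#}"]) auto
next
  case False then show ?thesis using assms unfolding mon_atomic_def by (simp add: nice_unit)
qed

lemma BFM_ACCP:
  assumes nM: "nice M" and B: "is_BFM M" shows "satisfies_ACCP M"
  unfolding satisfies_ACCP_def
proof (intro allI impI)
  fix s assume sM: "\<forall>n. s n \<in> M" and ch: "\<forall>n. principal_ideal M (s n) \<subseteq> principal_ideal M (s (Suc n))"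
  have at: "mon_atomic M" using B by (simp add: is_BFM_def)
  have step: "s n - s (Suc n) \<in> M" for n
  proof -
    have "s n \<in> principal_ideal M (s n)" using sM nM by (force simp: principal_ideal_def nice_def)
    then have "s n \<in> principal_ideal M (s (Suc n))" using ch by blast
    then obtain m where "m \<in> M" "s n = s (Suc n) + m" by (auto simp: principal_ideal_def)
    then show "s n - s (Suc n) \<in> M" by simp
  qed
  have diff: "s n - s (n + k) \<in> M" for n k
  proof (induction k)
    case 0 then show ?case using nM by (simp add: nice_def)
  next
    case (Suc k)
    have "s n - s (n + Suc k) = (s n - s (n+k)) + (s (n+k) - s (Suc (n+k)))" by simp
    then show ?case using Suc step[of "n+k"] nM unfolding nice_def by (metis add_Suc_right)
  qed
  have mono: "s (n+k) \<le> s n" for n k using diff[of n k] nM by (auto simp: nice_def)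
  show "\<exists>N. \<forall>n\<ge>N. principal_ideal M (s n) = principal_ideal M (s N)"
  proof (rule ccontr)
    assume H: "\<not> ?thesis"
    have H': "\<exists>n\<ge>N. s n < s N" for N
    proof -
      obtain n where "n \<ge> N" "principal_ideal M (s n) \<noteq> principal_ideal M (s N)" using H by blast
      then have "s n \<noteq> s N" by auto
      moreover have "s n \<le> s N" using mono[of N "n - N"] \<open>n \<ge> N\<close> by simp
      ultimately show ?thesis using \<open>n \<ge> N\<close> by force
    qed
    have long: "\<exists>n A. (\<forall>a\<in>#A. mon_atom M a) \<and> sum_mset A = s 0 - s n \<and> size A \<ge> L" for L
    proof (induction L)
      case 0 then show ?case by (intro exI[of _ 0] exI[of _ "{#}"]) auto
    next
      case (Suc L)
      then obtain n A where A: "\<forall>a\<in>#A. mon_atom M a" "sum_mset A = s 0 - s n" "size A \<ge> L" by blast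
      obtain n' where n': "n' \<ge> n" "s n' < s n" using H' by blast
      have "s n - s n' \<in> M" using diff[of n "n' - n"] n' by simp
      then obtain B where B: "\<forall>a\<in>#B. mon_atom M a" "sum_mset B = s n - s n'"
        using nice_fact[OF nM at] by blast
      have "B \<noteq> {#}" using B n' by auto
      then have "size B \<ge> 1" by (simp add: Suc_leI nonempty_has_size)
      show ?case
        by (rule exI[of _ n'], rule exI[of _ "A + B"]) (use A B \<open>size B \<ge> 1\<close> in auto)
    qed
    have "s 0 \<noteq> 0"
    proof -
      obtain n where "s n < s 0" using H'[of 0] by blast
      moreover have "s n \<ge> 0" using sM nM by (auto simp: nice_def)
      ultimately show ?thesis by linarith
    qed
    then have fin: "finite (lengths M (s 0))" using B sM by (auto simp: is_BFM_def)
    have "\<exists>l\<in>lengths M (s 0). l \<ge> L" for L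
    proof -
      obtain n A where A: "\<forall>a\<in>#A. mon_atom M a" "sum_mset A = s 0 - s n" "size A \<ge> L" using long by blast
      obtain C where C: "\<forall>a\<in>#C. mon_atom M a" "sum_mset C = s n" using nice_fact[OF nM at] sM by blast
      have "A + C \<in> factorizations M (s 0)" using A C by (auto simp: factorizations_def)
      then have "size (A + C) \<in> lengths M (s 0)" unfolding lengths_def by (rule imageI)
      then show ?thesis using A(3) by (intro bexI[of _ "size (A+C)"]) auto
    qed
    moreover obtain m where "\<forall>l\<in>lengths M (s 0). l \<le> m" using fin finite_nat_set_iff_bounded_le by blast
    ultimately show False by (meson Suc_n_not_le_n le_trans)
  qed
qed


section \<open>Evaluation of multisets of exponents\<close>

definition mev :: "real \<Rightarrow> int multiset \<Rightarrow> real" where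
  "mev a A = (\<Sum>k\<in>#A. a powi k)"

lemma mev_empty[simp]: "mev a {#} = 0" by (simp add: mev_def)
lemma mev_add[simp]: "mev a (A + B) = mev a A + mev a B" by (simp add: mev_def)
lemma mev_add_mset[simp]: "mev a (add_mset k A) = a powi k + mev a A" by (simp add: mev_def)

lemma mev_nonneg: "a > 0 \<Longrightarrow> mev a A \<ge> 0"
  by (induction A) (auto intro: add_nonneg_nonneg less_imp_le)

lemma mev_ge: assumes "a > 0" "k \<in># A" shows "a powi k \<le> mev a A"
proof -
  obtain A' where "A = add_mset k A'" using assms(2) by (metis multi_member_split)
  then show ?thesis using mev_nonneg[OF assms(1), of A'] by simp
qed

lemma sum_mset_ge_size:
  fixes A :: "real multiset"
  shows "(\<forall>a\<in>#A. c \<le> a) \<Longrightarrow> real (size A) * c \<le> sum_mset A"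
  by (induction A) (auto simp: algebra_simps)

lemma mev_size: "(\<forall>k\<in>#A. c \<le> a powi k) \<Longrightarrow> real (size A) * c \<le> mev a A"
  using sum_mset_ge_size[of "image_mset (\<lambda>k. a powi k) A" c] by (simp add: mev_def)

lemma mev_zero_iff: "a > 0 \<Longrightarrow> mev a A = 0 \<longleftrightarrow> A = {#}"
proof (cases A)
  case (add x A')
  assume "a > 0"
  then have "0 < a powi x" by simp
  then show ?thesis using add mev_nonneg[OF \<open>a > 0\<close>, of A'] by simp
qed simp

lemma nice_mev: "a > 0 \<Longrightarrow> nice (range (mev a))"
proof -
  assume a: "a > 0"
  have "0 \<in> range (mev a)" by (metis mev_empty rangeI)
  moreover have "\<forall>x\<in>range (mev a). x \<ge> 0" using mev_nonneg[OF a] by auto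
  moreover have "\<forall>x\<in>range (mev a). \<forall>y\<in>range (mev a). x + y \<in> range (mev a)"
  proof (intro ballI)
    fix x y assume "x \<in> range (mev a)" "y \<in> range (mev a)"
    then obtain A B where "x = mev a A" "y = mev a B" by blast
    then show "x + y \<in> range (mev a)" by (metis mev_add rangeI)
  qed
  ultimately show ?thesis by (simp add: nice_def)
qed

lemma mev_replicate: "mev a (replicate_mset n k) = of_nat n * a powi k"
  by (induction n) (auto simp: algebra_simps)

lemma laurent_eq: "laurent_monoid a = range (mev a)"
proof
  show "laurent_monoid a \<subseteq> range (mev a)"
  proof
    fix x assume "x \<in> laurent_monoid a"
    then obtain S c where S: "finite (S :: int set)" and x: "x = (\<Sum>k\<in>S. of_nat (c k) * a powi k)"
      by (auto simp: laurent_monoid_def)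
    have "(\<Sum>k\<in>S. of_nat (c k) * a powi k) = mev a (\<Sum>k\<in>S. replicate_mset (c k) k)"
      using S by (induction S rule: finite_induct) (auto simp: mev_replicate)
    then show "x \<in> range (mev a)" using x by auto
  qed
next
  show "range (mev a) \<subseteq> laurent_monoid a"
  proof
    fix x assume "x \<in> range (mev a)"
    then obtain A where x: "x = mev a A" by auto
    have "\<exists>S c. finite (S :: int set) \<and> (\<forall>j. j \<notin> S \<longrightarrow> c j = 0) \<and> mev a A = (\<Sum>k\<in>S. of_nat (c k) * a powi k)" for A
    proof (induction A)
      case empty
      show ?case by (intro exI[of _ "{}"] exI[of _ "\<lambda>_. 0"]) auto
    next
      case (add k A)
      then obtain S c where S: "finite S" "\<forall>j. j \<notin> S \<longrightarrow> c j = (0::nat)" "mev a A = (\<Sum>k\<in>S. of_nat (c k) * a powi k)"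
        by blast
      define c' where "c' = (\<lambda>j. c j + (if j = k then 1 else 0))"
      have e1: "(\<Sum>j\<in>insert k S. of_nat (c j) * a powi j) = (\<Sum>j\<in>S. of_nat (c j) * a powi j)"
        using S by (cases "k \<in> S") (auto simp: insert_absorb)
      have "(\<Sum>j\<in>insert k S. of_nat (c' j) * a powi j) = (\<Sum>j\<in>insert k S. of_nat (c j) * a powi j
             + (if j = k then a powi j else 0))"
        unfolding c'_def by (intro sum.cong) (auto simp: algebra_simps)
      also have "\<dots> = (\<Sum>j\<in>insert k S. of_nat (c j) * a powi j)
             + (\<Sum>j\<in>insert k S. (if j = k then a powi j else 0))"
        by (rule sum.distrib)
      also have "\<dots> = mev a (add_mset k A)" using S(1) e1 S(3) by simp
      finally show ?case using S by (intro exI[of _ "insert k S"] exI[of _ c']) (auto simp: c'_def)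
    qed
    then obtain S c where "finite (S :: int set)" "mev a A = (\<Sum>k\<in>S. of_nat (c k) * a powi k)" by blast
    then show "x \<in> laurent_monoid a" using x unfolding laurent_monoid_def by blast
  qed
qed

lemma finite_bounded_msets:
  assumes "finite V" shows "finite {E. set_mset E \<subseteq> V \<and> size E \<le> n}"
proof -
  have "{E. set_mset E \<subseteq> V \<and> size E \<le> n} = (\<Union>m\<le>n. multisets_of_size V m)"
    by (auto simp: multisets_of_size_def)
  then show ?thesis using assms by auto
qed

lemma FFM_crit:
  assumes a: "\<alpha> > 0" and b: "\<beta> > 0"
    and RP: "\<And>A B. mev \<alpha> A = mev \<alpha> B \<Longrightarrow> mev \<beta> A = mev \<beta> B"
    and fin: "\<And>X Y. finite {\<alpha> powi k | k. \<alpha> powi k \<le> X \<and> \<beta> powi k \<le> Y}"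
  shows "is_FFM (range (mev \<alpha>))"
proof -
  let ?M = "range (mev \<alpha>)"
  have nM: "nice ?M" using a by (rule nice_mev)
  have key: "\<exists>m0>0. \<exists>D. finite D \<and> (\<forall>u\<in>?M. x - u \<in> ?M \<longrightarrow> u \<in> D \<and> (u \<noteq> 0 \<longrightarrow> m0 \<le> u))"
    if xM: "x \<in> ?M" and x0: "x \<noteq> 0" for x
  proof -
    obtain A0 where x: "x = mev \<alpha> A0" using xM by blast
    define Y where "Y = mev \<beta> A0"
    define V where "V = {\<alpha> powi k | k. \<alpha> powi k \<le> x \<and> \<beta> powi k \<le> Y}"
    have fV: "finite V" using fin by (simp add: V_def)
    have D1: "\<forall>k\<in>#B. \<alpha> powi k \<in> V" if hB: "x - mev \<alpha> B \<in> ?M" for B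
    proof
      fix k assume k: "k \<in># B"
      obtain C where C: "x - mev \<alpha> B = mev \<alpha> C" using hB by blast
      have "mev \<alpha> (B + C) = mev \<alpha> A0" using C x by simp
      then have "mev \<beta> (B + C) = Y" using RP Y_def by blast
      then have "mev \<beta> B \<le> Y" using mev_nonneg[OF b, of C] by simp
      moreover have "\<beta> powi k \<le> mev \<beta> B" using mev_ge[OF b k] .
      moreover have "\<alpha> powi k \<le> mev \<alpha> B" using mev_ge[OF a k] .
      moreover have "mev \<alpha> B \<le> x" using C mev_nonneg[OF a, of C] by linarith
      ultimately show "\<alpha> powi k \<in> V" unfolding V_def by fastforce
    qed
    obtain k0 where k0: "k0 \<in># A0" using x \<open>x \<noteq> 0\<close> by (cases A0) auto
    have "x - mev \<alpha> A0 \<in> ?M" using x nM by (simp add: nice_def)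
    then have "\<alpha> powi k0 \<in> V" using D1[of A0] k0 by blast
    then have Vne: "V \<noteq> {}" by auto
    define m0 where "m0 = Min V"
    have Vpos: "\<forall>v\<in>V. v > 0" using a by (auto simp: V_def)
    have m0pos: "m0 > 0" using fV Vne Vpos by (simp add: m0_def)
    have m0le: "\<forall>v\<in>V. m0 \<le> v" using fV by (simp add: m0_def)
    define N where "N = nat \<lfloor>x / m0\<rfloor>"
    define D where "D = sum_mset ` {E. set_mset E \<subseteq> V \<and> size E \<le> N}"
    have "finite D" using finite_bounded_msets[OF fV] by (simp add: D_def)
    moreover have "u \<in> D \<and> (u \<noteq> 0 \<longrightarrow> m0 \<le> u)" if uM: "u \<in> ?M" and ux: "x - u \<in> ?M" for u
    proof -
      obtain B where B: "u = mev \<alpha> B" using uM by blast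
      have BV: "\<forall>k\<in>#B. \<alpha> powi k \<in> V" using D1[of B] ux B by simp
      then have sz: "real (size B) * m0 \<le> u" using mev_size[of B m0 \<alpha>] m0le B by auto
      moreover have "x - u \<ge> 0" using nM ux unfolding nice_def by blast
      then have "u \<le> x" by linarith
      ultimately have "real (size B) * m0 \<le> x" by linarith
      then have "real (size B) \<le> x / m0" using m0pos by (simp add: field_simps)
      then have sB: "size B \<le> N" unfolding N_def by (rule le_nat_floor)
      have u: "u = sum_mset (image_mset (\<lambda>k. \<alpha> powi k) B)" using B by (simp add: mev_def)
      have "image_mset (\<lambda>k. \<alpha> powi k) B \<in> {E. set_mset E \<subseteq> V \<and> size E \<le> N}"
        using BV sB by auto
      then have "u \<in> D" unfolding D_def u by (rule imageI)
      moreover have "m0 \<le> u" if "u \<noteq> 0"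
      proof -
        have "B \<noteq> {#}" using that B by auto
        then have "size B \<ge> 1" by (simp add: Suc_leI nonempty_has_size)
        then have "m0 \<le> real (size B) * m0" using m0pos by simp
        then show ?thesis using sz by linarith
      qed
      ultimately show ?thesis by blast
    qed
    ultimately show ?thesis using m0pos by blast
  qed
  have divM: "x - a \<in> ?M" if h1: "a \<in># A" and h2: "\<forall>e\<in>#A. e \<in> ?M" and h3: "sum_mset A = x" for A a x
  proof -
    obtain A' where A': "A = add_mset a A'" using h1 by (metis multi_member_split)
    then have "x - a = sum_mset A'" using h3 by auto
    moreover have "sum_mset A' \<in> ?M" using nice_sum_mset[OF nM] h2 A' by auto
    ultimately show ?thesis by simp
  qed
  have fact_fin: "finite (factorizations ?M x)" if xM: "x \<in> ?M" and x0: "x \<noteq> 0" for x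
  proof -
    obtain m0 D where m0: "m0 > 0" "finite D" and HD: "\<forall>u\<in>?M. x - u \<in> ?M \<longrightarrow> u \<in> D \<and> (u \<noteq> 0 \<longrightarrow> m0 \<le> u)"
      using key[OF xM x0] by blast
    have "factorizations ?M x \<subseteq> {E. set_mset E \<subseteq> D \<and> size E \<le> nat \<lfloor>x / m0\<rfloor>}"
    proof
      fix A assume "A \<in> factorizations ?M x"
      then have A: "\<forall>a\<in>#A. mon_atom ?M a" "sum_mset A = x" by (auto simp: factorizations_def)
      have AM: "\<forall>e\<in>#A. e \<in> ?M \<and> e \<noteq> 0" using A(1) nice_atom[OF nM] by blast
      have each: "a \<in> D \<and> m0 \<le> a" if "a \<in># A" for a
        using divM[OF that _ A(2)] AM HD that by blast
      then have "real (size A) * m0 \<le> x" using sum_mset_ge_size[of A m0] A(2) by auto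
      then have "real (size A) \<le> x / m0" using m0 by (simp add: field_simps)
      then have "size A \<le> nat \<lfloor>x / m0\<rfloor>" by (rule le_nat_floor)
      then show "A \<in> {E. set_mset E \<subseteq> D \<and> size E \<le> nat \<lfloor>x / m0\<rfloor>}" using each by auto
    qed
    then show ?thesis using finite_bounded_msets[OF m0(2)] by (rule finite_subset)
  qed
  have atomic: "mon_atomic ?M"
    unfolding mon_atomic_def
  proof (intro ballI impI)
    fix x assume xM: "x \<in> ?M" and nu: "\<not> mon_unit ?M x"
    then have x0: "x \<noteq> 0" using nice_unit[OF nM] by auto
    obtain m0 D where m0: "m0 > 0" and HD: "\<forall>u\<in>?M. x - u \<in> ?M \<longrightarrow> u \<in> D \<and> (u \<noteq> 0 \<longrightarrow> m0 \<le> u)"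
      using key[OF xM x0] by blast
    let ?Q = "\<lambda>E. (\<forall>e\<in>#E. e \<in> ?M \<and> e \<noteq> 0) \<and> sum_mset E = x"
    have bound: "size E < nat \<lfloor>x / m0\<rfloor> + 1" if "?Q E" for E
    proof -
      have QE: "\<forall>e\<in>#E. e \<in> ?M" "\<forall>e\<in>#E. e \<noteq> 0" "sum_mset E = x" using \<open>?Q E\<close> by auto
      have "m0 \<le> e" if eE: "e \<in># E" for e
      proof -
        have "x - e \<in> ?M" using divM[OF eE QE(1) QE(3)] .
        moreover have "e \<in> ?M" "e \<noteq> 0" using QE eE by auto
        ultimately show ?thesis using HD by blast
      qed
      then have "real (size E) * m0 \<le> x" using sum_mset_ge_size[of E m0] \<open>?Q E\<close> by auto
      then have "real (size E) \<le> x / m0" using m0 by (simp add: field_simps)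
      then have "size E \<le> nat \<lfloor>x / m0\<rfloor>" by (rule le_nat_floor)
      then show ?thesis by simp
    qed
    have "?Q {#x#}" using xM x0 by auto
    then obtain E where E: "?Q E" and Emax: "\<forall>E'. ?Q E' \<longrightarrow> size E' \<le> size E"
      using Lattices_Big.ex_has_greatest_nat[of ?Q "{#x#}" size "nat \<lfloor>x / m0\<rfloor> + 1"] bound by blast
    have "\<forall>e\<in>#E. mon_atom ?M e"
    proof
      fix e assume e: "e \<in># E"
      obtain E0 where E0: "E = add_mset e E0" using e by (metis multi_member_split)
      show "mon_atom ?M e" unfolding nice_atom[OF nM]
      proof (intro conjI ballI impI)
        show "e \<in> ?M" "e \<noteq> 0" using E e by auto
        fix y z assume yz: "y \<in> ?M" "z \<in> ?M" "e = y + z"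
        show "y = 0 \<or> z = 0"
        proof (rule ccontr)
          assume yz0: "\<not> (y = 0 \<or> z = 0)"
          define E' where "E' = add_mset y (add_mset z E0)"
          have "?Q E'" using E E0 yz yz0 by (auto simp: E'_def)
          moreover have "size E' = size E + 1" using E0 by (simp add: E'_def)
          ultimately show False using Emax by fastforce
        qed
      qed
    qed
    then show "\<exists>A. (\<forall>a\<in>set_mset A. mon_atom ?M a) \<and> sum_mset A = x" using E by blast
  qed
  show ?thesis unfolding is_FFM_def using atomic fact_fin by blast
qed


section \<open>Integer polynomials\<close>

abbreviation rpoly :: "int poly \<Rightarrow> real poly" where "rpoly Q \<equiv> map_poly of_int Q"

lemma rpoly_add: "rpoly (p + q) = rpoly p + rpoly q"
  by (rule poly_eqI) (simp add: coeff_map_poly)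
lemma rpoly_diff: "rpoly (p - q) = rpoly p - rpoly q"
  by (rule poly_eqI) (simp add: coeff_map_poly)
lemma rpoly_mult: "rpoly (p * q) = rpoly p * rpoly q"
  by (rule poly_eqI) (simp add: coeff_map_poly coeff_mult)
lemma rpoly_smult: "rpoly (smult c p) = smult (of_int c) (rpoly p)"
  by (rule poly_eqI) (simp add: coeff_map_poly)
lemma rpoly_monom: "rpoly (monom c n) = monom (of_int c) n"
  by (simp add: map_poly_monom)

definition pm :: "int multiset \<Rightarrow> int \<Rightarrow> int poly" where
  "pm C s = (\<Sum>k\<in>#C. monom 1 (nat (k + s)))"

lemma poly_pm:
  assumes "x > 0" "\<forall>k\<in>#C. 0 \<le> k + s"
  shows "poly (rpoly (pm C s)) x = x powi s * mev x C"
  using assms(2)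
proof (induction C)
  case empty then show ?case by (simp add: pm_def)
next
  case (add k C)
  have "pm (add_mset k C) s = monom 1 (nat (k + s)) + pm C s" by (simp add: pm_def)
  then have "poly (rpoly (pm (add_mset k C) s)) x = x ^ nat (k + s) + poly (rpoly (pm C s)) x"
    by (simp add: rpoly_add rpoly_monom poly_monom)
  also have "x ^ nat (k + s) = x powi (k + s)" using add.prems
    by (simp add: power_int_def)
  also have "\<dots> = x powi k * x powi s" using assms(1) by (simp add: power_int_add)
  finally show ?case using add by (simp add: algebra_simps)
qed

lemma exists_shift: "\<exists>s::int. \<forall>k\<in>#C. 0 \<le> k + s"
proof (induction C)
  case empty then show ?case by auto
next
  case (add k C)
  then obtain s where "\<forall>k\<in>#C. 0 \<le> k + s" by blast
  then show ?case by (intro exI[of _ "max s (-k)"]) auto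
qed

lemma RP_lemma:
  assumes a: "\<alpha> > 0" and b: "\<beta> > 0"
    and H: "\<And>Q. poly (rpoly Q) \<alpha> = 0 \<Longrightarrow> poly (rpoly Q) \<beta> = 0"
    and eq: "mev \<alpha> A = mev \<alpha> B"
  shows "mev \<beta> A = mev \<beta> B"
proof -
  obtain s where s: "\<forall>k\<in>#A + B. 0 \<le> k + s" using exists_shift by blast
  have sA: "\<forall>k\<in>#A. 0 \<le> k + s" and sB: "\<forall>k\<in>#B. 0 \<le> k + s" using s by auto
  let ?Q = "pm A s - pm B s"
  have "poly (rpoly ?Q) \<alpha> = \<alpha> powi s * mev \<alpha> A - \<alpha> powi s * mev \<alpha> B"
    by (simp add: rpoly_diff poly_pm[OF a sA] poly_pm[OF a sB])
  then have "poly (rpoly ?Q) \<alpha> = 0" using eq by simp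
  then have "poly (rpoly ?Q) \<beta> = 0" by (rule H)
  then have "\<beta> powi s * mev \<beta> A - \<beta> powi s * mev \<beta> B = 0"
    by (simp add: rpoly_diff poly_pm[OF b sA] poly_pm[OF b sB])
  then have "\<beta> powi s * (mev \<beta> A - mev \<beta> B) = 0" by (simp add: algebra_simps)
  moreover have "\<beta> powi s \<noteq> 0" using b by simp
  ultimately have "mev \<beta> A - mev \<beta> B = 0" by (metis mult_eq_0_iff)
  then show ?thesis by simp
qed

definition minpoly_prop :: "real \<Rightarrow> int poly \<Rightarrow> bool" where
  "minpoly_prop \<alpha> P \<longleftrightarrow> P \<noteq> 0 \<and> poly (rpoly P) \<alpha> = 0 \<and>
     (\<forall>Q. Q \<noteq> 0 \<and> poly (rpoly Q) \<alpha> = 0 \<longrightarrow> degree P \<le> degree Q)"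

lemma minpoly_exists:
  assumes "\<exists>Q. Q \<noteq> 0 \<and> poly (rpoly Q) \<alpha> = 0"
  shows "\<exists>P. minpoly_prop \<alpha> P"
proof -
  let ?R = "\<lambda>n. \<exists>Q. Q \<noteq> 0 \<and> poly (rpoly Q) \<alpha> = 0 \<and> degree Q = n"
  have "\<exists>n. ?R n" using assms by blast
  then obtain n where n: "?R n" and nmin: "\<forall>m<n. \<not> ?R m" using exists_least_iff[of ?R] by blast
  then obtain P where P: "P \<noteq> 0" "poly (rpoly P) \<alpha> = 0" "degree P = n" by blast
  have "degree P \<le> degree Q" if "Q \<noteq> 0" "poly (rpoly Q) \<alpha> = 0" for Q
    using nmin that P(3) not_le by blast
  then show ?thesis using P unfolding minpoly_prop_def by blast
qed

lemma minpoly_RP: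
  assumes mp: "minpoly_prop \<alpha> P" and b: "poly (rpoly P) \<beta> = 0"
    and Q: "poly (rpoly Q) \<alpha> = 0"
  shows "poly (rpoly Q) \<beta> = 0"
proof -
  have P0: "P \<noteq> 0" and Pa: "poly (rpoly P) \<alpha> = 0" using mp by (auto simp: minpoly_prop_def)
  define R where "R = pseudo_mod Q P"
  obtain c q where cq: "c \<noteq> 0" "smult c Q = P * q + R" using pseudo_mod(1)[OF P0] R_def by blast
  have Rdeg: "R = 0 \<or> degree R < degree P" using pseudo_mod(2)[OF P0] R_def by blast
  have ev: "of_int c * poly (rpoly Q) x = poly (rpoly P) x * poly (rpoly q) x + poly (rpoly R) x" for x
  proof -
    have "rpoly (smult c Q) = rpoly (P * q + R)" using cq by simp
    then have "poly (rpoly (smult c Q)) x = poly (rpoly (P * q + R)) x" by simp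
    then show ?thesis by (simp add: rpoly_smult rpoly_add rpoly_mult)
  qed
  have "poly (rpoly R) \<alpha> = 0" using ev[of \<alpha>] Q Pa by simp
  then have "R = 0" using Rdeg mp unfolding minpoly_prop_def by (meson not_le)
  then have "of_int c * poly (rpoly Q) \<beta> = 0" using ev[of \<beta>] b by simp
  then show ?thesis using cq(1) by simp
qed

lemma minpoly_not_one:
  assumes mp: "minpoly_prop \<alpha> P" and a1: "\<alpha> \<noteq> 1"
  shows "poly (rpoly P) 1 \<noteq> 0"
proof
  assume P1: "poly (rpoly P) 1 = 0"
  have P0: "P \<noteq> 0" and Pa: "poly (rpoly P) \<alpha> = 0" using mp by (auto simp: minpoly_prop_def)
  define Q where "Q = synthetic_div P 1"
  define c where "c = poly P 1"
  have id: "[:-1, 1:] * Q + [:c:] = P" unfolding Q_def c_def using synthetic_div_correct'[of 1 P] by simp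
  have ev: "poly (rpoly P) x = (x - 1) * poly (rpoly Q) x + of_int c" for x
  proof -
    have e1: "poly (rpoly [:-1, 1:]) x = x - 1" by (simp add: map_poly_pCons)
    have e2: "poly (rpoly [:c:]) x = of_int c" by (simp add: map_poly_pCons)
    have "rpoly P = rpoly ([:-1, 1:] * Q) + rpoly [:c:]" using id by (metis rpoly_add)
    then show ?thesis by (simp only: poly_add rpoly_mult poly_mult e1 e2)
  qed
  have "c = 0" using ev[of 1] P1 by simp
  then have Q0: "Q \<noteq> 0" using id P0 by auto
  have "poly (rpoly Q) \<alpha> = 0" using ev[of \<alpha>] Pa \<open>c = 0\<close> a1 by simp
  then have "degree P \<le> degree Q" using mp Q0 unfolding minpoly_prop_def by blast
  moreover have "degree P = degree Q + 1" using id \<open>c = 0\<close> Q0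
    by (metis add.right_neutral degree_mult_eq degree_pCons_eq_if one_neq_zero pCons_eq_0_iff pCons_0_0 add.commute Suc_eq_plus1 degree_0 zero_neq_one)
  ultimately show False by simp
qed


section \<open>Polya's theorem\<close>

lemma falling_prod:
  "k \<le> x \<Longrightarrow> (\<Prod>j\<in>{i0..<i0+k}. real x - real (j - i0)) = fact x / fact (x - k)"
proof (induction k)
  case 0 then show ?case by simp
next
  case (Suc k)
  have "(\<Prod>j\<in>{i0..<i0+Suc k}. real x - real (j - i0))
      = (\<Prod>j\<in>{i0..<i0+k}. real x - real (j - i0)) * (real x - real k)"
    by (simp add: prod.atLeastLessThan_Suc)
  also have "\<dots> = fact x / fact (x - k) * (real x - real k)" using Suc by simp
  also have "\<dots> = fact x / fact (x - Suc k)"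
  proof -
    have xk: "x - k = Suc (x - Suc k)" using Suc.prems by simp
    have e: "fact (x - k) = (real x - real k) * (fact (x - Suc k) :: real)"
      unfolding xk fact_Suc using Suc.prems by (simp add: of_nat_diff)
    have nz: "real x - real k \<noteq> 0" using Suc.prems by simp
    show ?thesis unfolding e using nz by (simp add: field_simps)
  qed
  finally show ?case .
qed

lemma falling_zero:
  "x < k \<Longrightarrow> (\<Prod>j\<in>{i0..<i0+k}. real x - real (j - i0)) = 0"
  by (rule prod_zero) (auto intro!: bexI[of _ "i0 + x"])

lemma prod_approx:
  fixes x y :: "nat \<Rightarrow> real"
  assumes "\<And>j. j < k \<Longrightarrow> \<bar>x j\<bar> \<le> B \<and> \<bar>y j\<bar> \<le> B \<and> \<bar>x j - y j\<bar> \<le> d"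
  shows "\<bar>(\<Prod>j<k. x j) - (\<Prod>j<k. y j)\<bar> \<le> real k * d * B ^ (k - 1)"
  using assms
proof (induction k)
  case 0 then show ?case by simp
next
  case (Suc k)
  let ?X = "\<Prod>j<k. x j" and ?Y = "\<Prod>j<k. y j"
  have IH: "\<bar>?X - ?Y\<bar> \<le> real k * d * B ^ (k - 1)" using Suc by auto
  have hk: "\<bar>x k\<bar> \<le> B" "\<bar>y k\<bar> \<le> B" "\<bar>x k - y k\<bar> \<le> d" using Suc.prems[of k] by auto
  have B0: "B \<ge> 0" using hk by linarith
  have d0: "d \<ge> 0" using hk by linarith
  have Xb: "\<bar>?X\<bar> \<le> B ^ k"
  proof -
    have "\<bar>?X\<bar> = (\<Prod>j<k. \<bar>x j\<bar>)" by (simp add: abs_prod)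
    also have "\<dots> \<le> (\<Prod>j<k. B)" by (rule prod_mono) (use Suc.prems in auto)
    finally show ?thesis by simp
  qed
  have "(\<Prod>j<Suc k. x j) - (\<Prod>j<Suc k. y j) = ?X * (x k - y k) + y k * (?X - ?Y)"
    by (simp add: algebra_simps)
  then have "\<bar>(\<Prod>j<Suc k. x j) - (\<Prod>j<Suc k. y j)\<bar> \<le> \<bar>?X\<bar> * \<bar>x k - y k\<bar> + \<bar>y k\<bar> * \<bar>?X - ?Y\<bar>"
    by (metis abs_mult abs_triangle_ineq)
  also have "\<dots> \<le> B ^ k * d + B * (real k * d * B ^ (k - 1))"
    by (intro add_mono mult_mono) (use Xb hk IH B0 d0 in auto)
  also have "\<dots> = real (Suc k) * d * B ^ (Suc k - 1)"
  proof (cases k)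
    case 0 then show ?thesis by simp
  next
    case (Suc k')
    then have "B * B ^ (k - 1) = B ^ k" by simp
    then show ?thesis by (simp add: algebra_simps)
  qed
  finally show ?case .
qed

lemma coeff_binpow: "coeff ([:1, 1:] ^ N) k = (of_nat (N choose k) :: 'a :: comm_semiring_1)"
proof (cases "k \<le> N")
  case True then show ?thesis by (simp add: coeff_linear_poly_power)
next
  case False
  have "degree ([:1, 1::'a:] ^ N) \<le> N"
    by (rule order.trans[OF degree_power_le]) simp
  then show ?thesis using False by (simp add: coeff_eq_0 binomial_eq_0)
qed

lemma polya:
  fixes G :: "real poly"
  defines "n \<equiv> degree G"
  assumes pos: "\<And>t. 0 \<le> t \<Longrightarrow> t \<le> 1 \<Longrightarrow> (\<Sum>i\<le>n. coeff G i * t ^ i * (1 - t) ^ (n - i)) > 0"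
  shows "\<exists>N. \<forall>m. coeff ([:1, 1:] ^ N * G) m \<ge> 0"
proof -
  define a where "a = coeff G"
  define h where "h = (\<lambda>t. \<Sum>i\<le>n. a i * t ^ i * (1 - t) ^ (n - i))"
  have "continuous_on {0..1} h" unfolding h_def by (intro continuous_intros)
  then obtain t0 where t0: "t0 \<in> {0..1}" "\<forall>t\<in>{0..1}. h t0 \<le> h t"
    using continuous_attains_inf[of "{0..1::real}" h] by auto
  define \<mu> where "\<mu> = h t0"
  have mu: "\<mu> > 0" using pos t0(1) by (auto simp: \<mu>_def h_def a_def)
  have hmu: "\<mu> \<le> h t" if "0 \<le> t" "t \<le> 1" for t using t0 that by (auto simp: \<mu>_def)
  define AA where "AA = (\<Sum>i\<le>n. \<bar>a i\<bar>)"
  define N where "N = nat \<lceil>AA * real n * real n / \<mu>\<rceil> + 1"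
  define T where "T = N + n"
  have a0: "a i = 0" if "i > n" for i using that by (simp add: a_def n_def coeff_eq_0)
  show ?thesis
  proof (intro exI allI)
    fix m
    have em: "coeff ([:1, 1:] ^ N * G) m = (\<Sum>i\<le>n. if i \<le> m then a i * real (N choose (m - i)) else 0)"
    proof -
      have "coeff ([:1, 1:] ^ N * G) m = coeff (G * [:1, 1:] ^ N) m" by (simp add: mult.commute)
      also have "\<dots> = (\<Sum>i\<le>m. a i * real (N choose (m - i)))" by (simp add: coeff_mult coeff_binpow a_def)
      also have "\<dots> = (\<Sum>i\<le>m+n. if i \<le> m then a i * real (N choose (m - i)) else 0)"
        by (rule sum.mono_neutral_cong_left) auto
      also have "\<dots> = (\<Sum>i\<le>n. if i \<le> m then a i * real (N choose (m - i)) else 0)"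
        by (rule sum.mono_neutral_cong_right) (auto simp: a0)
      finally show ?thesis .
    qed
    show "coeff ([:1, 1:] ^ N * G) m \<ge> 0"
    proof (cases "m \<le> T")
      case False
      then have "(if i \<le> m then a i * real (N choose (m - i)) else 0) = 0" if "i \<le> n" for i
        using that by (auto simp: T_def)
      then show ?thesis using em by simp
    next
      case mT: True
      define F where "F = (\<lambda>i. (\<Prod>j\<in>{0..<0+i}. real m - real (j - 0)) * (\<Prod>j\<in>{i..<i+(n-i)}. real (T - m) - real (j - i)))"
      define FT where "FT = (\<Prod>j\<in>{0..<0+n}. real T - real (j - 0))"
      have FTv: "FT = fact T / fact N" using falling_prod[of n T 0] by (simp add: FT_def T_def)
      have FTpos: "FT > 0" by (simp add: FTv)
      have CTpos: "real (T choose m) > 0" using mT by simp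
      have ident: "real (T choose m) * F i = FT * (if i \<le> m then real (N choose (m - i)) else 0)" if iN: "i \<le> n" for i
      proof (cases "i \<le> m")
        case False
        then have "(\<Prod>j\<in>{0..<0+i}. real m - real (j - 0)) = 0" by (intro falling_zero) simp
        then show ?thesis using False by (simp add: F_def)
      next
        case im: True
        show ?thesis
        proof (cases "m - i \<le> N")
          case False
          then have "T - m < n - i" using im iN mT by (simp add: T_def)
          then have z: "(\<Prod>j\<in>{i..<i+(n-i)}. real (T - m) - real (j - i)) = 0" by (rule falling_zero)
          have "F i = 0" unfolding F_def z by simp
          moreover have "N choose (m - i) = 0" using False by simp
          ultimately show ?thesis using im by simp
        next
          case miN: True
          have p1: "(\<Prod>j\<in>{0..<0+i}. real m - real (j - 0)) = fact m / fact (m - i)"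
            using falling_prod[of i m 0] im by simp
          have p2: "(\<Prod>j\<in>{i..<i+(n-i)}. real (T - m) - real (j - i)) = fact (T - m) / fact (N - (m - i))"
          proof -
            have "n - i \<le> T - m" "T - m - (n - i) = N - (m - i)" using miN im iN mT by (auto simp: T_def)
            then show ?thesis using falling_prod[of "n - i" "T - m" i] by simp
          qed
          have c1: "real (T choose m) = fact T / (fact m * fact (T - m))" using mT by (rule binomial_fact)
          have c2: "real (N choose (m - i)) = fact N / (fact (m - i) * fact (N - (m - i)))" using miN by (rule binomial_fact)
          show ?thesis unfolding F_def p1 p2 c1 c2 FTv using im by (simp add: field_simps)
        qed
      qed
      have approx: "\<bar>F i - real m ^ i * real (T - m) ^ (n - i)\<bar> \<le> real n * real n * real T ^ (n - 1)" if iN: "i \<le> n" for i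
      proof -
        define x where "x = (\<lambda>j. if j < i then real m - real j else real (T - m) - real (j - i))"
        define y where "y = (\<lambda>j. if j < i then real m else real (T - m))"
        have Fx: "F i = (\<Prod>j<n. x j)"
        proof -
          have "(\<Prod>j<n. x j) = (\<Prod>j\<in>{..<n} \<inter> {j. j < i}. real m - real j) * (\<Prod>j\<in>{..<n} \<inter> - {j. j < i}. real (T - m) - real (j - i))"
            unfolding x_def by (rule prod.If_cases) simp
          moreover have "{..<n} \<inter> {j. j < i} = {0..<0+i}" "{..<n} \<inter> - {j. j < i} = {i..<i+(n-i)}" using iN by auto
          ultimately show ?thesis by (simp add: F_def)
        qed
        have Gy: "real m ^ i * real (T - m) ^ (n - i) = (\<Prod>j<n. y j)"
        proof -
          have "(\<Prod>j<n. y j) = (\<Prod>j\<in>{..<n} \<inter> {j. j < i}. real m) * (\<Prod>j\<in>{..<n} \<inter> - {j. j < i}. real (T - m))"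
            unfolding y_def by (rule prod.If_cases) simp
          moreover have "{..<n} \<inter> {j. j < i} = {..<i}" "{..<n} \<inter> - {j. j < i} = {i..<n}" using iN by auto
          ultimately show ?thesis by simp
        qed
        have "\<bar>(\<Prod>j<n. x j) - (\<Prod>j<n. y j)\<bar> \<le> real n * real n * real T ^ (n - 1)"
        proof (rule prod_approx)
          fix j assume j: "j < n"
          have r1: "real (T - m) = real T - real m" using mT by (simp add: of_nat_diff)
          have r2: "j \<ge> i \<Longrightarrow> real (j - i) = real j - real i" by (simp add: of_nat_diff)
          have "real m \<le> real T" "real n \<le> real T" using mT by (auto simp: T_def)
          then show "\<bar>x j\<bar> \<le> real T \<and> \<bar>y j\<bar> \<le> real T \<and> \<bar>x j - y j\<bar> \<le> real n"
            using j iN by (auto simp: x_def y_def r1 r2)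
        qed
        then show ?thesis using Fx Gy by simp
      qed
      have T0: "real T > 0" by (simp add: T_def N_def)
      have homog: "(\<Sum>i\<le>n. a i * (real m ^ i * real (T - m) ^ (n - i))) = real T ^ n * h (real m / real T)"
      proof -
        have "real T ^ n * h (real m / real T) = (\<Sum>i\<le>n. a i * (real T ^ n * ((real m / real T) ^ i * (1 - real m / real T) ^ (n - i))))"
          unfolding h_def by (simp add: sum_distrib_left algebra_simps)
        also have "\<dots> = (\<Sum>i\<le>n. a i * (real m ^ i * real (T - m) ^ (n - i)))"
        proof (rule sum.cong[OF refl])
          fix i assume "i \<in> {..n}"
          then have i: "i \<le> n" by simp
          have q: "1 - real m / real T = real (T - m) / real T" using T0 mT by (simp add: field_simps of_nat_diff)
          have "real T ^ i * real T ^ (n - i) = real T ^ n" using i by (simp add: power_add[symmetric])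
          then have "real T ^ n * ((real m / real T) ^ i * (1 - real m / real T) ^ (n - i)) = real m ^ i * real (T - m) ^ (n - i)"
            unfolding q using T0 by (simp add: power_divide field_simps)
          then show "a i * (real T ^ n * ((real m / real T) ^ i * (1 - real m / real T) ^ (n - i))) = a i * (real m ^ i * real (T - m) ^ (n - i))"
            by simp
        qed
        finally show ?thesis by simp
      qed
      have hm: "h (real m / real T) \<ge> \<mu>" using hmu T0 mT by (simp add: field_simps)
      have low: "(\<Sum>i\<le>n. a i * F i) \<ge> real T ^ n * \<mu> - AA * (real n * real n * real T ^ (n - 1))"
      proof -
        have "(\<Sum>i\<le>n. a i * F i) = (\<Sum>i\<le>n. a i * (real m ^ i * real (T - m) ^ (n - i))) + (\<Sum>i\<le>n. a i * (F i - real m ^ i * real (T - m) ^ (n - i)))"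
          by (simp add: sum.distrib[symmetric] algebra_simps)
        moreover have "(\<Sum>i\<le>n. a i * (F i - real m ^ i * real (T - m) ^ (n - i))) \<ge> (\<Sum>i\<le>n. - (\<bar>a i\<bar> * (real n * real n * real T ^ (n - 1))))"
        proof (rule sum_mono)
          fix i assume "i \<in> {..n}"
          then have "\<bar>F i - real m ^ i * real (T - m) ^ (n - i)\<bar> \<le> real n * real n * real T ^ (n - 1)" using approx by simp
          then have "\<bar>a i * (F i - real m ^ i * real (T - m) ^ (n - i))\<bar> \<le> \<bar>a i\<bar> * (real n * real n * real T ^ (n - 1))"
            by (simp add: abs_mult mult_left_mono)
          then show "- (\<bar>a i\<bar> * (real n * real n * real T ^ (n - 1))) \<le> a i * (F i - real m ^ i * real (T - m) ^ (n - i))"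
            by linarith
        qed
        moreover have "(\<Sum>i\<le>n. - (\<bar>a i\<bar> * (real n * real n * real T ^ (n - 1)))) = - (AA * (real n * real n * real T ^ (n - 1)))"
          by (simp add: AA_def sum_distrib_right sum_negf)
        moreover have "real T ^ n * h (real m / real T) \<ge> real T ^ n * \<mu>" using hm T0 by simp
        ultimately show ?thesis using homog by linarith
      qed
      have "real T ^ n * \<mu> - AA * (real n * real n * real T ^ (n - 1)) \<ge> 0"
      proof (cases "n = 0")
        case True then show ?thesis using mu by simp
      next
        case False
        then have Tn: "real T ^ n = real T * real T ^ (n - 1)" by (metis power_eq_if)
        have "AA * real n * real n / \<mu> \<le> real (nat \<lceil>AA * real n * real n / \<mu>\<rceil>)" by (rule real_nat_ceiling_ge)
        then have "AA * real n * real n / \<mu> \<le> real T" by (simp add: T_def N_def)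
        then have "AA * real n * real n \<le> real T * \<mu>" using mu by (simp add: field_simps)
        then have "AA * (real n * real n) * real T ^ (n - 1) \<le> real T * \<mu> * real T ^ (n - 1)"
          by (intro mult_right_mono) (auto simp: algebra_simps)
        then show ?thesis unfolding Tn by (simp add: algebra_simps)
      qed
      with low have S0: "(\<Sum>i\<le>n. a i * F i) \<ge> 0" by linarith
      have "real (T choose m) * (\<Sum>i\<le>n. a i * F i) = (\<Sum>i\<le>n. a i * (real (T choose m) * F i))"
        by (simp add: sum_distrib_left algebra_simps)
      also have "\<dots> = (\<Sum>i\<le>n. FT * (if i \<le> m then a i * real (N choose (m - i)) else 0))"
        by (rule sum.cong[OF refl]) (simp add: ident)
      also have "\<dots> = FT * coeff ([:1, 1:] ^ N * G) m" by (simp add: em sum_distrib_left)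
      finally have eq: "real (T choose m) * (\<Sum>i\<le>n. a i * F i) = FT * coeff ([:1, 1:] ^ N * G) m" .
      have "0 \<le> real (T choose m) * (\<Sum>i\<le>n. a i * F i)" using S0 CTpos by simp
      then have "FT * coeff ([:1, 1:] ^ N * G) m \<ge> 0" using eq by simp
      then show ?thesis using FTpos by (simp add: zero_le_mult_iff)
    qed
  qed
qed


section \<open>Failure of ACCP\<close>

lemma rpoly_neg: "rpoly (- p) = - rpoly p"
  by (rule poly_eqI) (simp add: coeff_map_poly)

lemma rpoly_power: "rpoly (p ^ n) = rpoly p ^ n"
  by (induction n) (simp_all add: rpoly_mult)

lemma homog_pos:
  fixes p :: "real poly"
  assumes pos: "\<And>x. x \<ge> 0 \<Longrightarrow> poly p x > 0" and lc: "lead_coeff p > 0"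
    and t: "0 \<le> t" "t \<le> 1"
  shows "(\<Sum>i\<le>degree p. coeff p i * t ^ i * (1 - t) ^ (degree p - i)) > 0"
proof (cases "t = 1")
  case True
  have "(\<Sum>i\<le>degree p. coeff p i * t ^ i * (1 - t) ^ (degree p - i))
      = (\<Sum>i\<le>degree p. if i = degree p then lead_coeff p else 0)"
    by (rule sum.cong[OF refl]) (auto simp: True)
  then show ?thesis using lc by simp
next
  case False
  then have t1: "t < 1" using t by simp
  define u where "u = t / (1 - t)"
  have u0: "u \<ge> 0" using t t1 by (simp add: u_def)
  have "(1 - t) ^ degree p * poly p u = (\<Sum>i\<le>degree p. coeff p i * t ^ i * (1 - t) ^ (degree p - i))"
  proof -
    have "(1 - t) ^ degree p * poly p u = (\<Sum>i\<le>degree p. coeff p i * ((1 - t) ^ degree p * u ^ i))"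
      by (simp add: poly_altdef sum_distrib_left algebra_simps)
    also have "\<dots> = (\<Sum>i\<le>degree p. coeff p i * t ^ i * (1 - t) ^ (degree p - i))"
    proof (rule sum.cong[OF refl])
      fix i assume "i \<in> {..degree p}"
      then have i: "i \<le> degree p" by simp
      have "(1 - t) ^ degree p = (1 - t) ^ i * (1 - t) ^ (degree p - i)"
        using i by (simp add: power_add[symmetric])
      then have "(1 - t) ^ degree p * u ^ i = t ^ i * (1 - t) ^ (degree p - i)"
        using t1 by (simp add: u_def power_divide field_simps)
      then show "coeff p i * ((1 - t) ^ degree p * u ^ i) = coeff p i * t ^ i * (1 - t) ^ (degree p - i)"
        by simp
    qed
    finally show ?thesis .
  qed
  moreover have "(1 - t) ^ degree p * poly p u > 0" using pos[OF u0] t1 by simp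
  ultimately show ?thesis by simp
qed

lemma int_poly_in_M:
  assumes "\<forall>i. coeff W i \<ge> 0"
  shows "poly (rpoly W) a \<in> laurent_monoid a"
proof -
  define S where "S = int ` {..degree W}"
  define c where "c = (\<lambda>k::int. nat (coeff W (nat k)))"
  have "(\<Sum>k\<in>S. of_nat (c k) * a powi k) = (\<Sum>i\<le>degree W. of_nat (c (int i)) * a powi (int i))"
    unfolding S_def by (subst sum.reindex) (auto simp: inj_on_def)
  also have "\<dots> = (\<Sum>i\<le>degree W. of_int (coeff W i) * a ^ i)"
    using assms by (intro sum.cong refl) (simp add: c_def)
  also have "\<dots> = poly (rpoly W) a"
    by (simp add: poly_altdef degree_map_poly coeff_map_poly)
  finally have eq: "(\<Sum>k\<in>S. of_nat (c k) * a powi k) = poly (rpoly W) a" .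
  have "finite S" by (simp add: S_def)
  then have "poly (rpoly W) a = (\<Sum>k\<in>S. of_nat (c k) * a powi k) \<and> finite S" using eq by simp
  then show ?thesis unfolding laurent_monoid_def by blast
qed

lemma mev_shift:
  assumes "a > 0"
  shows "a ^ k * mev a A = mev a (image_mset (\<lambda>j. j + int k) A)"
proof (induction A)
  case empty then show ?case by simp
next
  case (add x A)
  have "a powi (x + int k) = a powi x * a ^ k" using assms by (simp add: power_int_add)
  then show ?case using add by (simp add: algebra_simps)
qed

lemma not_ACCP:
  assumes a: "0 < \<alpha>" "\<alpha> < 1" and Pa: "poly (rpoly P) \<alpha> = 0"
    and nr: "\<And>x. x \<ge> 1 \<Longrightarrow> poly (rpoly P) x \<noteq> 0"
  shows "\<not> satisfies_ACCP (range (mev \<alpha>))"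
proof -
  have posq: "\<forall>x\<ge>1. poly q x > 0" if q1: "\<forall>x\<ge>1. poly q x \<noteq> 0" and q2: "poly q 1 > 0" for q :: "real poly"
  proof (intro allI impI)
    fix x :: real assume x: "x \<ge> 1"
    show "poly q x > 0"
    proof (rule ccontr)
      assume "\<not> poly q x > 0"
      then have "poly q x < 0" using q1 x by force
      then have "x > 1" using q2 x by (cases "x = 1") auto
      then obtain z where "1 < z" "z < x" "poly q z = 0" using poly_IVT_neg[of 1 x q] q2 \<open>poly q x < 0\<close> by auto
      then show False using q1 by auto
    qed
  qed
  obtain P1 where P1a: "poly (rpoly P1) \<alpha> = 0" and P1pos: "\<forall>x\<ge>1. poly (rpoly P1) x > 0"
  proof (cases "poly (rpoly P) 1 > 0")
    case True
    then show ?thesis using that[of P] Pa posq[of "rpoly P"] nr by auto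
  next
    case False
    then have "poly (rpoly (-P)) 1 > 0" using nr[of 1] by (simp add: rpoly_neg)
    moreover have "\<forall>x\<ge>1. poly (rpoly (-P)) x \<noteq> 0" using nr by (simp add: rpoly_neg)
    ultimately show ?thesis using that[of "-P"] Pa posq[of "rpoly (-P)"] by (auto simp: rpoly_neg)
  qed
  define q where "q = rpoly P1"
  have qa: "poly q \<alpha> = 0" and qpos: "\<And>x. x \<ge> 1 \<Longrightarrow> poly q x > 0" using P1a P1pos by (auto simp: q_def)
  have q0: "q \<noteq> 0" using qpos[of 1] by auto
  have lcq: "lead_coeff q > 0"
  proof (rule ccontr)
    assume "\<not> lead_coeff q > 0"
    then have "lead_coeff (- q) > 0" using q0 by (simp add: less_le)
    then obtain n0 where "\<forall>x\<ge>n0. poly (- q) x \<ge> lead_coeff (- q)" using poly_pinfty_gt_lc by blast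
    then have "poly (- q) (max n0 1) \<ge> lead_coeff (- q)" by simp
    then have "poly (- q) (max n0 1) > 0" using \<open>lead_coeff (- q) > 0\<close> by linarith
    then show False using qpos[of "max n0 1"] by simp
  qed
  obtain p0 where p0: "p0 > 0" "\<And>x. x \<ge> 1 \<Longrightarrow> poly q x \<ge> p0"
  proof -
    obtain R where R: "\<forall>x\<ge>R. poly q x \<ge> lead_coeff q" using poly_pinfty_gt_lc[OF lcq] by blast
    have "continuous_on {1..max R 1} (poly q)" by (intro continuous_intros)
    then obtain t1 where t1: "t1 \<in> {1..max R 1}" "\<forall>t\<in>{1..max R 1}. poly q t1 \<le> poly q t"
      using continuous_attains_inf[of "{1..max R 1}" "poly q"] by auto
    have "poly q t1 > 0" using qpos t1(1) by auto
    show ?thesis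
    proof (rule that[of "min (lead_coeff q) (poly q t1)"])
      show "min (lead_coeff q) (poly q t1) > 0" using lcq \<open>poly q t1 > 0\<close> by simp
      fix x :: real assume "x \<ge> 1"
      show "min (lead_coeff q) (poly q t1) \<le> poly q x"
      proof (cases "x \<le> max R 1")
        case True then show ?thesis using t1(2) \<open>x \<ge> 1\<close> by force
      next
        case False
        then have "x \<ge> R" by simp
        then have "poly q x \<ge> lead_coeff q" using R by blast
        then show ?thesis by simp
      qed
    qed
  qed
  obtain r where r: "r > 0" "\<And>x. x \<noteq> 1 \<Longrightarrow> \<bar>1 - x\<bar> < r \<Longrightarrow> poly q x > 0"
  proof -
    have "isCont (\<lambda>x. poly q x) 1" by (rule poly_isCont)
    then have "(\<lambda>x. poly q x) \<midarrow>1\<rightarrow> poly q 1" by (simp add: isCont_def)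
    from LIM_fun_gt_zero[OF this qpos[of 1]] show ?thesis using that by auto
  qed
  define \<delta> where "\<delta> = min r (1/2)"
  have d0: "\<delta> > 0" "\<delta> \<le> 1/2" using r by (auto simp: \<delta>_def)
  have dpos: "poly q x > 0" if "1 - \<delta> < x" "x \<le> 1" for x
  proof (cases "x = 1")
    case True then show ?thesis using qpos by simp
  next
    case False then show ?thesis using r(2)[of x] that by (auto simp: \<delta>_def)
  qed
  obtain t2 where t2: "\<forall>t\<in>{0..1}. poly q t2 \<le> poly q t"
  proof -
    have "continuous_on {0..1} (poly q)" by (intro continuous_intros)
    then show ?thesis using continuous_attains_inf[of "{0..1::real}" "poly q"] that by auto
  qed
  define Bd where "Bd = \<bar>poly q t2\<bar>"
  have Bd0: "Bd \<ge> 0" by (simp add: Bd_def)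
  have Bd1: "poly q x \<ge> - Bd" if "0 \<le> x" "x \<le> 1" for x
  proof -
    have "poly q t2 \<le> poly q x" using t2 that by auto
    moreover have "- Bd \<le> poly q t2" by (simp add: Bd_def)
    ultimately show ?thesis by linarith
  qed
  note Bd = Bd0 Bd1
  define c where "c = nat \<lceil>1 / p0\<rceil> + 1"
  have c1: "real c \<ge> 1" by (simp add: c_def)
  have cp0: "real c * p0 \<ge> 1"
  proof -
    have "1 / p0 \<le> real (nat \<lceil>1 / p0\<rceil>)" by (rule real_nat_ceiling_ge)
    then have "1 / p0 \<le> real c" by (simp add: c_def)
    then show ?thesis using p0(1) by (simp add: field_simps)
  qed
  have "real c * Bd \<ge> 0" using Bd(1) by simp
  then have cpos: "0 < real c * Bd + 1" by linarith
  have "\<delta> / (real c * Bd + 1) > 0" using d0 cpos by simp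
  then obtain j0 where j0: "(1 - \<delta>) ^ j0 < \<delta> / (real c * Bd + 1)"
    using real_arch_pow_inv[of "\<delta> / (real c * Bd + 1)" "1 - \<delta>"] d0 by auto
  define j where "j = j0 + 2"
  have jsmall: "real c * Bd * (1 - \<delta>) ^ j < \<delta>"
  proof -
    have "(1 - \<delta>) ^ j \<le> (1 - \<delta>) ^ j0" unfolding j_def using d0 by (intro power_decreasing) auto
    moreover have "(1 - \<delta>) ^ j0 * (real c * Bd + 1) < \<delta>" using j0 cpos by (metis pos_less_divide_eq)
    moreover have "real c * Bd \<ge> 0" using Bd(1) c1 by simp
    moreover have "(1 - \<delta>) ^ j \<ge> 0" using d0 by simp
    ultimately have "real c * Bd * (1 - \<delta>) ^ j \<le> real c * Bd * (1 - \<delta>) ^ j0"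
      by (intro mult_left_mono) auto
    also have "\<dots> \<le> (1 - \<delta>) ^ j0 * (real c * Bd + 1)"
      using d0 by (simp add: algebra_simps)
    finally show ?thesis using \<open>(1 - \<delta>) ^ j0 * (real c * Bd + 1) < \<delta>\<close> by linarith
  qed
  define G where "G = [:1, -1:] + monom (int c) j * P1"
  define Gr where "Gr = [:1, -1:] + monom (real c) j * q"
  have GGr: "rpoly G = Gr" by (simp add: G_def Gr_def q_def rpoly_add rpoly_mult rpoly_monom map_poly_pCons)
  have evG: "poly Gr x = 1 - x + real c * x ^ j * poly q x" for x
    by (simp add: Gr_def poly_monom)
  have Gpos: "poly Gr x > 0" if x0: "x \<ge> 0" for x
  proof -
    consider "x \<ge> 1" | "1 - \<delta> < x \<and> x < 1" | "x \<le> 1 - \<delta>" by linarith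
    then show ?thesis
    proof cases
      case 1
      have "x ^ 1 \<le> x ^ j" unfolding j_def using 1 by (intro power_increasing) auto
      then have xj: "x ^ j \<ge> x" by simp
      have "real c * p0 \<le> real c * poly q x" using p0(2)[OF 1] c1 by (intro mult_left_mono) auto
      then have cq: "real c * poly q x \<ge> 1" using cp0 by linarith
      have "x ^ j \<ge> 0" using x0 by simp
      then have "x ^ j * 1 \<le> x ^ j * (real c * poly q x)" using cq by (intro mult_left_mono) auto
      then have "real c * x ^ j * poly q x \<ge> x" using xj by (simp add: algebra_simps)
      then show ?thesis using evG[of x] by linarith
    next
      case 2
      then have "poly q x > 0" using dpos by auto
      then have "real c * x ^ j * poly q x \<ge> 0" using x0 c1 by simp
      then show ?thesis using evG[of x] 2 by linarith
    next
      case 3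
      have "x ^ j \<le> (1 - \<delta>) ^ j" using 3 x0 by (intro power_mono) auto
      have "poly q x \<ge> - Bd" using Bd(2)[of x] 3 x0 d0 by auto
      have "real c * x ^ j * poly q x \<ge> - (real c * Bd * (1 - \<delta>) ^ j)"
      proof -
        have "real c * x ^ j * poly q x \<ge> real c * x ^ j * (- Bd)"
          using \<open>poly q x \<ge> - Bd\<close> x0 c1 by (intro mult_left_mono) auto
        moreover have "real c * x ^ j * Bd \<le> real c * (1 - \<delta>) ^ j * Bd"
          using \<open>x ^ j \<le> (1 - \<delta>) ^ j\<close> c1 Bd(1) by (intro mult_right_mono mult_left_mono) auto
        ultimately show ?thesis by (simp add: algebra_simps)
      qed
      then show ?thesis using evG[of x] jsmall 3 by linarith
    qed
  qed
  have mc0: "monom (real c) j \<noteq> 0" using c1 by simp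
  have "real c \<noteq> 0" using c1 by simp
  then have dm: "degree (monom (real c) j) = j" by (rule degree_monom_eq)
  have degq: "degree (monom (real c) j * q) = j + degree q"
    by (simp only: degree_mult_eq[OF mc0 q0] dm)
  have lcG: "lead_coeff Gr > 0"
  proof -
    have "degree [:1, -1::real:] < degree (monom (real c) j * q)" using degq by (simp add: j_def)
    then have "lead_coeff Gr = lead_coeff (monom (real c) j * q)" unfolding Gr_def by (rule lead_coeff_add_le)
    also have "\<dots> = real c * lead_coeff q" by (simp only: lead_coeff_mult) (simp add: dm)
    finally show ?thesis using lcq c1 by simp
  qed
  obtain N where N: "\<forall>m. coeff ([:1, 1:] ^ N * Gr) m \<ge> 0"
    using polya[of Gr] homog_pos[of Gr] Gpos lcG by auto
  define W where "W = [:1, 1:] ^ N * G"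
  have rW: "rpoly W = [:1, 1:] ^ N * Gr" by (simp add: W_def rpoly_mult rpoly_power GGr map_poly_pCons)
  have Wnn: "\<forall>m. coeff W m \<ge> 0"
  proof
    fix m
    have "coeff (rpoly W) m \<ge> 0" using N rW by simp
    then show "coeff W m \<ge> 0" by (simp add: coeff_map_poly)
  qed
  have Bnn: "\<forall>m. coeff ([:1, 1::int:] ^ N) m \<ge> 0" by (simp add: coeff_binpow)
  define y where "y = (1 + \<alpha>) ^ N"
  define z where "z = y * (1 - \<alpha>)"
  have yM: "y \<in> range (mev \<alpha>)"
  proof -
    have "poly (rpoly ([:1, 1::int:] ^ N)) \<alpha> = y" by (simp add: y_def rpoly_power map_poly_pCons poly_power)
    then show ?thesis using int_poly_in_M[OF Bnn, of \<alpha>] laurent_eq by auto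
  qed
  have zM: "z \<in> range (mev \<alpha>)"
  proof -
    have "poly (rpoly W) \<alpha> = z" by (simp add: rW evG qa z_def y_def poly_power)
    then show ?thesis using int_poly_in_M[OF Wnn, of \<alpha>] laurent_eq by auto
  qed
  obtain Y0 where Y0: "y = mev \<alpha> Y0" using yM by blast
  obtain Z0 where Z0: "z = mev \<alpha> Z0" using zM by blast
  define s where "s = (\<lambda>k. \<alpha> ^ k * y)"
  have sM: "s k \<in> range (mev \<alpha>)" for k
    unfolding s_def Y0 mev_shift[OF a(1)] by blast
  have sd: "s k - s (Suc k) \<in> range (mev \<alpha>)" for k
  proof -
    have "s k - s (Suc k) = \<alpha> ^ k * z" by (simp add: s_def z_def algebra_simps)
    then show ?thesis unfolding Z0 mev_shift[OF a(1)] by simp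
  qed
  have ypos: "y > 0" using a by (simp add: y_def)
  have nM: "nice (range (mev \<alpha>))" using a(1) by (rule nice_mev)
  show ?thesis unfolding satisfies_ACCP_def
  proof (intro notI)
    assume H: "\<forall>s. (\<forall>n. s n \<in> range (mev \<alpha>)) \<longrightarrow>
      (\<forall>n. principal_ideal (range (mev \<alpha>)) (s n) \<subseteq> principal_ideal (range (mev \<alpha>)) (s (Suc n))) \<longrightarrow>
      (\<exists>N. \<forall>n\<ge>N. principal_ideal (range (mev \<alpha>)) (s n) = principal_ideal (range (mev \<alpha>)) (s N))"
    have incl: "principal_ideal (range (mev \<alpha>)) (s n) \<subseteq> principal_ideal (range (mev \<alpha>)) (s (Suc n))" for n
    proof
      fix v assume "v \<in> principal_ideal (range (mev \<alpha>)) (s n)"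
      then obtain w where w: "w \<in> range (mev \<alpha>)" "v = s n + w" by (auto simp: principal_ideal_def)
      have dM: "(s n - s (Suc n)) + w \<in> range (mev \<alpha>)" using nM sd[of n] w(1) unfolding nice_def by blast
      have "v = s (Suc n) + ((s n - s (Suc n)) + w)" using w by simp
      then show "v \<in> principal_ideal (range (mev \<alpha>)) (s (Suc n))"
        unfolding principal_ideal_def using dM by (rule image_eqI)
    qed
    have sM': "\<forall>n. s n \<in> range (mev \<alpha>)" using sM by blast
    have incl': "\<forall>n. principal_ideal (range (mev \<alpha>)) (s n) \<subseteq> principal_ideal (range (mev \<alpha>)) (s (Suc n))"
      using incl by blast
    from H[rule_format, of s, OF sM incl] obtain N0 where
      N0: "\<forall>n\<ge>N0. principal_ideal (range (mev \<alpha>)) (s n) = principal_ideal (range (mev \<alpha>)) (s N0)"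
      by blast
    have z0: "0 \<in> range (mev \<alpha>)" using nM by (simp add: nice_def)
    have "s (Suc N0) \<in> principal_ideal (range (mev \<alpha>)) (s (Suc N0))"
    proof -
      have e: "s (Suc N0) = (\<lambda>m. s (Suc N0) + m) 0" by simp
      show ?thesis unfolding principal_ideal_def using e z0 by (rule image_eqI)
    qed
    moreover have "principal_ideal (range (mev \<alpha>)) (s (Suc N0)) = principal_ideal (range (mev \<alpha>)) (s N0)"
      using N0 le_SucI[OF order_refl] by blast
    ultimately have "s (Suc N0) \<in> principal_ideal (range (mev \<alpha>)) (s N0)" by simp
    then obtain w where w: "w \<in> range (mev \<alpha>)" "s (Suc N0) = s N0 + w" by (auto simp: principal_ideal_def)
    then have "w \<ge> 0" using nM by (auto simp: nice_def)
    moreover have "s (Suc N0) < s N0" using a ypos by (simp add: s_def)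
    ultimately show False using w(2) by linarith
  qed
qed


lemma fin_kset:
  fixes a b X Y :: real
  assumes a: "0 < a" "a < 1" and b: "1 < b"
  shows "finite {a powi k | k. a powi k \<le> X \<and> b powi k \<le> Y}"
proof -
  have ia: "1 < inverse a" using a by (simp add: one_less_inverse)
  obtain n1 where n1: "X < (inverse a) ^ n1" using real_arch_pow[OF ia] by blast
  obtain n2 where n2: "Y < b ^ n2" using real_arch_pow[OF b] by blast
  have "{a powi k | k. a powi k \<le> X \<and> b powi k \<le> Y} \<subseteq> (\<lambda>k. a powi k) ` {- int n1..int n2}"
  proof
    fix v assume "v \<in> {a powi k | k. a powi k \<le> X \<and> b powi k \<le> Y}"
    then obtain k where k: "v = a powi k" "a powi k \<le> X" "b powi k \<le> Y" by blast
    have "k \<ge> - int n1"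
    proof (rule ccontr)
      assume "\<not> k \<ge> - int n1"
      then have "k < 0" "nat (-k) \<ge> n1" by auto
      then have "a powi k = inverse a ^ nat (-k)" by (simp add: power_int_def)
      moreover have "inverse a ^ nat (-k) \<ge> inverse a ^ n1"
        using \<open>nat (-k) \<ge> n1\<close> ia by (intro power_increasing) auto
      ultimately show False using k n1 by linarith
    qed
    moreover have "k \<le> int n2"
    proof (rule ccontr)
      assume "\<not> k \<le> int n2"
      then have "k \<ge> 0" "nat k \<ge> n2" by auto
      then have "b powi k = b ^ nat k" by (simp add: power_int_def)
      moreover have "b ^ nat k \<ge> b ^ n2" using \<open>nat k \<ge> n2\<close> b by (intro power_increasing) auto
      ultimately show False using k n2 by linarith
    qed
    ultimately show "v \<in> (\<lambda>k. a powi k) ` {- int n1..int n2}" using k(1) by auto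
  qed
  then show ?thesis by (rule finite_subset) auto
qed

lemma main_le1:
  assumes a: "0 < \<alpha>" "\<alpha> \<le> 1"
  shows "is_FFM (range (mev \<alpha>)) \<or> \<not> satisfies_ACCP (range (mev \<alpha>))"
proof (cases "\<alpha> = 1")
  case True
  have "is_FFM (range (mev \<alpha>))"
  proof (rule FFM_crit[OF a(1), of 1])
    show "mev 1 A = mev 1 B" if "mev \<alpha> A = mev \<alpha> B" for A B using that True by simp
    show "finite {\<alpha> powi k | k. \<alpha> powi k \<le> X \<and> 1 powi k \<le> Y}" for X Y :: real
      by (rule finite_subset[of _ "{1}"]) (auto simp: True)
  qed simp
  then show ?thesis ..
next
  case False
  then have a1: "\<alpha> < 1" using a by simp
  show ?thesis
  proof (cases "\<exists>Q. Q \<noteq> 0 \<and> poly (rpoly Q) \<alpha> = 0")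
    case False
    have "is_FFM (range (mev \<alpha>))"
    proof (rule FFM_crit[OF a(1), of "inverse \<alpha>"])
      show "inverse \<alpha> > 0" using a by simp
      show "mev (inverse \<alpha>) A = mev (inverse \<alpha>) B" if "mev \<alpha> A = mev \<alpha> B" for A B
      proof (rule RP_lemma[OF a(1) _ _ that])
        show "inverse \<alpha> > 0" using a by simp
        fix Q assume "poly (rpoly Q) \<alpha> = 0"
        then have "Q = 0" using False by blast
        then show "poly (rpoly Q) (inverse \<alpha>) = 0" by simp
      qed
      show "finite {\<alpha> powi k | k. \<alpha> powi k \<le> X \<and> inverse \<alpha> powi k \<le> Y}" for X Y
        by (rule fin_kset) (use a a1 in \<open>auto simp: one_less_inverse\<close>)
    qed
    then show ?thesis ..
  next
    case True
    then obtain P where mp: "minpoly_prop \<alpha> P" using minpoly_exists by blast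
    show ?thesis
    proof (cases "\<exists>\<beta>>1. poly (rpoly P) \<beta> = 0")
      case True
      then obtain \<beta> where b: "\<beta> > 1" "poly (rpoly P) \<beta> = 0" by blast
      have "is_FFM (range (mev \<alpha>))"
      proof (rule FFM_crit[OF a(1), of \<beta>])
        show "\<beta> > 0" using b by simp
        show "mev \<beta> A = mev \<beta> B" if "mev \<alpha> A = mev \<alpha> B" for A B
          by (rule RP_lemma[OF a(1) _ _ that]) (use b minpoly_RP[OF mp b(2)] in auto)
        show "finite {\<alpha> powi k | k. \<alpha> powi k \<le> X \<and> \<beta> powi k \<le> Y}" for X Y
          by (rule fin_kset) (use a a1 b in auto)
      qed
      then show ?thesis ..
    next
      case False
      have "\<not> satisfies_ACCP (range (mev \<alpha>))"
      proof (rule not_ACCP[OF a(1) a1])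
        show "poly (rpoly P) \<alpha> = 0" using mp by (simp add: minpoly_prop_def)
        show "poly (rpoly P) x \<noteq> 0" if "x \<ge> 1" for x
        proof (cases "x = 1")
          case True then show ?thesis using minpoly_not_one[OF mp] a1 by simp
        next
          case False then show ?thesis using \<open>\<not> (\<exists>\<beta>>1. poly (rpoly P) \<beta> = 0)\<close> that by auto
        qed
      qed
      then show ?thesis ..
    qed
  qed
qed

lemma mev_inverse: "mev (inverse a) A = mev a (image_mset uminus A)"
  by (induction A) (simp_all add: power_int_minus power_int_inverse)

lemma range_mev_inverse: "range (mev (inverse a)) = range (mev a)"
proof
  show "range (mev (inverse a)) \<subseteq> range (mev a)" by (auto simp: mev_inverse)
  show "range (mev a) \<subseteq> range (mev (inverse a))"
  proof
    fix x assume "x \<in> range (mev a)"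
    then obtain A where "x = mev a A" by blast
    then have "x = mev (inverse a) (image_mset uminus A)" by (simp add: mev_inverse multiset.map_comp o_def)
    then show "x \<in> range (mev (inverse a))" by blast
  qed
qed

lemma core:
  assumes "0 < \<alpha>" "\<alpha> \<le> 1"
  shows "(is_FFM (range (mev \<alpha>)) \<longleftrightarrow> is_BFM (range (mev \<alpha>)))
       \<and> (is_BFM (range (mev \<alpha>)) \<longleftrightarrow> satisfies_ACCP (range (mev \<alpha>)))"
  using FFM_BFM BFM_ACCP[OF nice_mev[OF assms(1)]] main_le1[OF assms] by blast

theorem theorem4p3:
  fixes \<alpha> :: real
  assumes "\<alpha> > 0"
  shows "(is_FFM (laurent_monoid \<alpha>) \<longleftrightarrow> is_BFM (laurent_monoid \<alpha>))
       \<and> (is_BFM (laurent_monoid \<alpha>) \<longleftrightarrow> satisfies_ACCP (laurent_monoid \<alpha>))"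
proof (cases "\<alpha> \<le> 1")
  case True then show ?thesis using core[OF assms True] laurent_eq by simp
next
  case False
  then have "0 < inverse \<alpha>" "inverse \<alpha> \<le> 1" using assms by (auto simp: inverse_le_1_iff)
  then have "(is_FFM (range (mev (inverse \<alpha>))) \<longleftrightarrow> is_BFM (range (mev (inverse \<alpha>))))
       \<and> (is_BFM (range (mev (inverse \<alpha>))) \<longleftrightarrow> satisfies_ACCP (range (mev (inverse \<alpha>))))" by (rule core)
  moreover have "laurent_monoid \<alpha> = range (mev (inverse \<alpha>))" using laurent_eq range_mev_inverse by simp
  ultimately show ?thesis by simp
qed

end
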